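(* Assume $\nabla f$ is $L$-Lipschitz, and consider the SAM flow at a point where not all $g_k$ vanish. Then the Norm Deviation $Q$ satisfies $$\frac{dQ}{dt}=4\rho u K\cdot\mathrm{Cov}\big(\|\mathcal G_k\|_F^2,\|g_k\|_F^2\big)+R,$$ where there is a constant $C$ depending only on $\Phi$, $K$, $L$, the Frobenius norms of the current cores and $\|\nabla f(\mathcal T)\|_F$ (with $\mathcal T=\Phi(\mathcal G_1,\ldots,\mathcal G_K)$) such that $|R|\le C\rho^2$ for all $\rho\in(0,1]$.
   Context: Let $K\ge 2$. For each $k\in[K]$ let $V_k$ be a finite-dimensional real space of tensors with Frobenius inner product $\langle\cdot,\cdot\rangle_F$ and norm $\|\cdot\|_F$; $[K]=\{1,\ldots,K\}$. Let $\Phi:V_1\times\cdots\times V_K\to\mathbb R^{n_1\times\cdots\times n_d}$ be multilinear, $f:\mathbb R^{n_1\times\cdots\times n_d}\to\mathbb R$ continuously differentiable with $\|\nabla f(\mathcal X)-\nabla f(\mathcal Y)\|_F\le L\|\mathcal X-\mathcal Y\|_F$ for all $\mathcal X,\mathcal Y$, and $F:=f\circ\Phi$. SAM gradient flow with radius $\rho>0$: at a point $(\mathcal G_1,\ldots,\mathcal G_K)$ let $g_k=\nabla_{\mathcal G_k}F(\mathcal G_1,\ldots,\mathcal G_K)$, $u=(\sum_{j=1}^K\|g_j\|_F^2)^{-1/2}$ (requiring not all $g_j=0$), $\tilde{\mathcal G}_k=\mathcal G_k+\rho u g_k$, $\tilde g_k=\nabla_{\mathcal G_k}F(\tilde{\mathcal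 G}_1,\ldots,\tilde{\mathcal G}_K)$; the SAM flow is $\frac{d}{dt}\mathcal G_k=-\tilde g_k$ for all $k$, and time derivatives are along this flow. The Norm Deviation is $Q:=\sum_{k=1}^K\big(\|\mathcal G_k\|_F^2-\frac1K\sum_{i=1}^K\|\mathcal G_i\|_F^2\big)^2$. The empirical covariance is $\mathrm{Cov}(x_k,y_k):=\frac1K\sum_{k=1}^K(x_k-\bar x)(y_k-\bar y)$ with $\bar x,\bar y$ the means over $k\in[K]$. *)

theory Defs
  imports "HOL-Analysis.Analysis"
begin

text \<open>A point (G_1,...,G_K) of V_1 x ... x V_K is an element of type 'v ^ 'k, where the
  finite index type 'k plays the role of [K] (K = CARD('k)) and each core space V_k is a
  linear subspace V k of a common Euclidean space 'v (Frobenius inner product = inner product).\<close>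

definition vupd :: "'v ^ 'k \<Rightarrow> 'k \<Rightarrow> 'v \<Rightarrow> 'v ^ 'k" where
  "vupd G k x = (\<chi> j. if j = k then x else G $ j)"

definition in_cores :: "('k \<Rightarrow> 'v set) \<Rightarrow> 'v ^ 'k \<Rightarrow> bool" where
  "in_cores V G \<longleftrightarrow> (\<forall>j. G $ j \<in> V j)"

definition multilinear_on :: "('k \<Rightarrow> 'v::real_vector set) \<Rightarrow> ('v ^ 'k \<Rightarrow> 'w::real_vector) \<Rightarrow> bool" where
  "multilinear_on V \<Phi> \<longleftrightarrow>
     (\<forall>G k. in_cores V G \<longrightarrow>
        (\<forall>x\<in>V k. \<forall>y\<in>V k. \<forall>a b::real.
           \<Phi> (vupd G k (a *\<^sub>R x + b *\<^sub>R y)) = a *\<^sub>R \<Phi> (vupd G k x) + b *\<^sub>R \<Phi> (vupd G k y)))"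

definition pgrad :: "('k \<Rightarrow> 'v::real_inner set) \<Rightarrow> ('v ^ 'k \<Rightarrow> real) \<Rightarrow> 'v ^ 'k \<Rightarrow> 'k \<Rightarrow> 'v" where
  "pgrad V F G k = (THE g. g \<in> V k \<and>
      ((\<lambda>h. F (vupd G k (G $ k + h))) has_derivative (\<lambda>h. g \<bullet> h)) (at 0 within V k))"

definition sam_u :: "('k::finite \<Rightarrow> 'v::real_inner set) \<Rightarrow> ('v ^ 'k \<Rightarrow> real) \<Rightarrow> 'v ^ 'k \<Rightarrow> real" where
  "sam_u V F G = 1 / sqrt (\<Sum>j\<in>UNIV. (norm (pgrad V F G j))\<^sup>2)"

definition sam_pert :: "('k::finite \<Rightarrow> 'v::real_inner set) \<Rightarrow> ('v ^ 'k \<Rightarrow> real) \<Rightarrow> real \<Rightarrow> 'v ^ 'k \<Rightarrow> 'v ^ 'k" where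
  "sam_pert V F \<rho> G = (\<chi> k. G $ k + (\<rho> * sam_u V F G) *\<^sub>R pgrad V F G k)"

definition sam_vel :: "('k::finite \<Rightarrow> 'v::real_inner set) \<Rightarrow> ('v ^ 'k \<Rightarrow> real) \<Rightarrow> real \<Rightarrow> 'v ^ 'k \<Rightarrow> 'v ^ 'k" where
  "sam_vel V F \<rho> G = (\<chi> k. - pgrad V F (sam_pert V F \<rho> G) k)"

definition norm_dev :: "'v::real_normed_vector ^ 'k::finite \<Rightarrow> real" where
  "norm_dev G = (\<Sum>k\<in>UNIV. ((norm (G $ k))\<^sup>2 - (1 / real CARD('k)) * (\<Sum>i\<in>UNIV. (norm (G $ i))\<^sup>2))\<^sup>2)"

definition emp_mean :: "('k::finite \<Rightarrow> real) \<Rightarrow> real" where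
  "emp_mean x = (1 / real CARD('k)) * (\<Sum>k\<in>UNIV. x k)"

definition emp_cov :: "('k::finite \<Rightarrow> real) \<Rightarrow> ('k \<Rightarrow> real) \<Rightarrow> real" where
  "emp_cov x y = (1 / real CARD('k)) * (\<Sum>k\<in>UNIV. (x k - emp_mean x) * (y k - emp_mean y))"

end

theory Submission
  imports Defs
begin


lemma vupd_nth[simp]: "vupd G k x $ j = (if j = k then x else G $ j)"
  by (simp add: vupd_def)

lemma vupd_same[simp]: "vupd G k (G $ k) = G"
  by (simp add: vec_eq_iff)

lemma vupd_vupd[simp]: "vupd (vupd G k x) k y = vupd G k y"
  by (simp add: vec_eq_iff)

lemma in_cores_vupd: "in_cores V G \<Longrightarrow> x \<in> V k \<Longrightarrow> in_cores V (vupd G k x)"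
  by (simp add: in_cores_def)

lemma ml_lin:
  assumes "multilinear_on V \<Phi>" "in_cores V G" "x \<in> V k" "y \<in> V k"
  shows "\<Phi> (vupd G k (a *\<^sub>R x + b *\<^sub>R y)) = a *\<^sub>R \<Phi> (vupd G k x) + b *\<^sub>R \<Phi> (vupd G k y)"
  using assms unfolding multilinear_on_def by blast

lemma ml_zero:
  assumes "multilinear_on V \<Phi>" "in_cores V G"
  shows "\<Phi> (vupd G k 0) = 0"
proof -
  have "G $ k \<in> V k" using assms(2) by (simp add: in_cores_def)
  from ml_lin[OF assms this this, of 0 0] show ?thesis by simp
qed

lemma ml_add:
  assumes "multilinear_on V \<Phi>" "in_cores V G" "x \<in> V k" "y \<in> V k"
  shows "\<Phi> (vupd G k (x + y)) = \<Phi> (vupd G k x) + \<Phi> (vupd G k y)"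
  using ml_lin[OF assms, of 1 1] by simp

lemma ml_diff:
  assumes "multilinear_on V \<Phi>" "in_cores V G" "x \<in> V k" "y \<in> V k"
  shows "\<Phi> (vupd G k (x - y)) = \<Phi> (vupd G k x) - \<Phi> (vupd G k y)"
  using ml_lin[OF assms, of 1 "-1"] by simp

lemma ml_scale:
  assumes "multilinear_on V \<Phi>" "in_cores V G" "x \<in> V k"
  shows "\<Phi> (vupd G k (a *\<^sub>R x)) = a *\<^sub>R \<Phi> (vupd G k x)"
  using ml_lin[OF assms assms(3), of a 0] by simp

lemma ml_sum:
  assumes subsp: "\<forall>k. subspace (V k)" and ml: "multilinear_on V \<Phi>" and G: "in_cores V G"
    and "finite A" "A \<subseteq> V k"
  shows "\<Phi> (vupd G k (\<Sum>b\<in>A. c b *\<^sub>R b)) = (\<Sum>b\<in>A. c b *\<^sub>R \<Phi> (vupd G k b))"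
  using assms(4,5)
proof (induction A rule: finite_induct)
  case empty
  then show ?case using ml_zero[OF ml G] by simp
next
  case (insert x F)
  have xV: "x \<in> V k" and FV: "F \<subseteq> V k" using insert by auto
  have "(\<Sum>b\<in>F. c b *\<^sub>R b) \<in> V k"
    using FV subsp by (meson subsetD subspace_scale subspace_sum)
  then have "\<Phi> (vupd G k (c x *\<^sub>R x + 1 *\<^sub>R (\<Sum>b\<in>F. c b *\<^sub>R b))) =
     c x *\<^sub>R \<Phi> (vupd G k x) + 1 *\<^sub>R \<Phi> (vupd G k (\<Sum>b\<in>F. c b *\<^sub>R b))"
    using ml_lin[OF ml G xV] by blast
  then show ?case using insert FV by simp
qed



lemma grad_unique:
  fixes S :: "'v::real_inner set"
  assumes S: "subspace S" and g1: "g1 \<in> S" and g2: "g2 \<in> S"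
    and d1: "(F has_derivative (\<lambda>h. g1 \<bullet> h)) (at 0 within S)"
    and d2: "(F has_derivative (\<lambda>h. g2 \<bullet> h)) (at 0 within S)"
  shows "g1 = g2"
proof -
  define w where "w = g1 - g2"
  have wS: "w \<in> S" using S g1 g2 by (simp add: w_def subspace_diff)
  define p where "p = (\<lambda>s::real. s *\<^sub>R w)"
  have pd: "(p has_derivative (\<lambda>s. s *\<^sub>R w)) (at 0)"
    unfolding p_def by (auto intro!: derivative_eq_intros)
  have img: "p ` UNIV \<subseteq> S" using wS S by (auto simp: p_def subspace_scale)
  have p0: "p 0 = 0" by (simp add: p_def)
  have c1: "((F \<circ> p) has_derivative ((\<lambda>h. g1 \<bullet> h) \<circ> (\<lambda>s. s *\<^sub>R w))) (at 0)"
    using diff_chain_within[OF pd] has_derivative_subset[OF d1 img]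
    by (metis p0)
  have c2: "((F \<circ> p) has_derivative ((\<lambda>h. g2 \<bullet> h) \<circ> (\<lambda>s. s *\<^sub>R w))) (at 0)"
    using diff_chain_within[OF pd] has_derivative_subset[OF d2 img]
    by (metis p0)
  from has_derivative_unique[OF c1 c2] have "g1 \<bullet> w = g2 \<bullet> w"
    by (metis comp_apply scaleR_one)
  then have "w \<bullet> w = 0" by (simp add: w_def inner_diff_left)
  then show ?thesis by (simp add: w_def)
qed

lemma pgrad_char:
  fixes V :: "'k::finite \<Rightarrow> 'v::euclidean_space set" and \<Phi> :: "'v ^ 'k \<Rightarrow> 'w::euclidean_space"
  assumes subsp: "\<forall>k. subspace (V k)" and ml: "multilinear_on V \<Phi>"
    and fd: "\<forall>X. (f has_derivative (\<lambda>H. gf X \<bullet> H)) (at X)"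
    and G: "in_cores V G"
  shows "pgrad V (f \<circ> \<Phi>) G k \<in> V k \<and>
    (\<forall>h\<in>V k. pgrad V (f \<circ> \<Phi>) G k \<bullet> h = gf (\<Phi> G) \<bullet> \<Phi> (vupd G k h))"
proof -
  obtain B where BV: "B \<subseteq> V k" and Bo: "pairwise orthogonal B"
    and B1: "\<And>x. x \<in> B \<Longrightarrow> norm x = 1" and Bi: "independent B" and Bs: "span B = V k"
    using orthonormal_basis_subspace[of "V k"] subsp by metis
  have Bf: "finite B" using Bi by (rule finiteI_independent)
  define w where "w b = \<Phi> (vupd G k b)" for b
  define T where "T = \<Phi> G"
  define g where "g = (\<Sum>b\<in>B. (gf T \<bullet> w b) *\<^sub>R b)"
  have gV: "g \<in> V k" unfolding g_def
    using BV subsp by (meson subsetD subspace_scale subspace_sum)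
  have gh: "g \<bullet> h = gf T \<bullet> (\<Sum>b\<in>B. (b \<bullet> h) *\<^sub>R w b)" for h
    unfolding g_def by (simp add: inner_sum_left inner_sum_right mult.commute)
  have eqV: "\<Phi> (vupd G k h) = (\<Sum>b\<in>B. (b \<bullet> h) *\<^sub>R w b)" if "h \<in> V k" for h
  proof -
    have "h = (\<Sum>b\<in>B. (h \<bullet> b) *\<^sub>R b)"
      using orthonormal_basis_expand[OF Bo B1 _ Bf, of h] that Bs by simp
    then have "\<Phi> (vupd G k h) = \<Phi> (vupd G k (\<Sum>b\<in>B. (h \<bullet> b) *\<^sub>R b))" by simp
    also have "\<dots> = (\<Sum>b\<in>B. (h \<bullet> b) *\<^sub>R w b)"
      unfolding w_def by (rule ml_sum[OF subsp ml G Bf BV])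
    finally show ?thesis by (simp add: inner_commute)
  qed
  have GkV: "G $ k \<in> V k" using G by (simp add: in_cores_def)
  have eqF: "(f \<circ> \<Phi>) (vupd G k (G $ k + h)) = f (T + (\<Sum>b\<in>B. (b \<bullet> h) *\<^sub>R w b))"
    if "h \<in> V k" for h
    using ml_add[OF ml G GkV that] eqV[OF that] by (simp add: T_def)
  have inner: "((\<lambda>h. T + (\<Sum>b\<in>B. (b \<bullet> h) *\<^sub>R w b)) has_derivative
      (\<lambda>h. (\<Sum>b\<in>B. (b \<bullet> h) *\<^sub>R w b))) (at 0)"
    by (auto intro!: derivative_eq_intros)
  have outer: "(f has_derivative (\<lambda>H. gf T \<bullet> H)) (at (T + (\<Sum>b\<in>B. (b \<bullet> 0) *\<^sub>R w b)))"
    using fd by simp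
  have d0: "((\<lambda>h. f (T + (\<Sum>b\<in>B. (b \<bullet> h) *\<^sub>R w b))) has_derivative (\<lambda>h. g \<bullet> h)) (at 0)"
    using has_derivative_compose[OF inner outer] by (simp add: gh)
  have d1: "((\<lambda>h. (f \<circ> \<Phi>) (vupd G k (G $ k + h))) has_derivative (\<lambda>h. g \<bullet> h)) (at 0 within V k)"
    apply (rule has_derivative_transform_within[OF has_derivative_at_withinI[OF d0], of 1])
    using subsp eqF by (auto simp: subspace_0)
  have P: "pgrad V (f \<circ> \<Phi>) G k = g"
    unfolding pgrad_def
  proof (rule the_equality)
    show "g \<in> V k \<and> ((\<lambda>h. (f \<circ> \<Phi>) (vupd G k (G $ k + h))) has_derivative (\<lambda>h. g \<bullet> h)) (at 0 within V k)"
      using gV d1 by blast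
    fix g' assume "g' \<in> V k \<and> ((\<lambda>h. (f \<circ> \<Phi>) (vupd G k (G $ k + h))) has_derivative (\<lambda>h. g' \<bullet> h)) (at 0 within V k)"
    then show "g' = g" using grad_unique[of "V k" g' g] subsp gV d1 by blast
  qed
  show ?thesis using P gV gh eqV by (simp add: T_def)
qed



lemma obtain_bases:
  fixes V :: "'k \<Rightarrow> 'v::euclidean_space set"
  assumes subsp: "\<forall>k. subspace (V k)"
  obtains B where "\<And>k. B k \<subseteq> V k" "\<And>k. pairwise orthogonal (B k)"
    "\<And>k x. x \<in> B k \<Longrightarrow> norm x = 1" "\<And>k. finite (B k)" "\<And>k. span (B k) = V k"
proof -
  have "\<forall>k. \<exists>B. B \<subseteq> V k \<and> pairwise orthogonal B \<and> (\<forall>x\<in>B. norm x = 1) \<and> finite B \<and> span B = V k"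
  proof
    fix k
    obtain B where "B \<subseteq> V k" "pairwise orthogonal B" "\<And>x. x \<in> B \<Longrightarrow> norm x = 1"
      "independent B" "span B = V k"
      using orthonormal_basis_subspace[of "V k"] subsp by metis
    then show "\<exists>B. B \<subseteq> V k \<and> pairwise orthogonal B \<and> (\<forall>x\<in>B. norm x = 1) \<and> finite B \<and> span B = V k"
      using finiteI_independent by blast
  qed
  then obtain B where "\<forall>k. B k \<subseteq> V k \<and> pairwise orthogonal (B k) \<and> (\<forall>x\<in>B k. norm x = 1) \<and> finite (B k) \<and> span (B k) = V k"
    by metis
  then show ?thesis using that by blast
qed

lemma phi_bound:
  fixes V :: "'k::finite \<Rightarrow> 'v::euclidean_space set" and \<Phi> :: "'v ^ 'k \<Rightarrow> 'w::euclidean_space"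
  assumes subsp: "\<forall>k. subspace (V k)" and ml: "multilinear_on V \<Phi>"
  shows "\<exists>M\<ge>0. \<forall>H. in_cores V H \<longrightarrow> norm (\<Phi> H) \<le> M * (\<Prod>i\<in>UNIV. norm (H $ i))"
proof -
  obtain B where BV: "\<And>k. B k \<subseteq> V k" and Bo: "\<And>k. pairwise orthogonal (B k)"
    and B1: "\<And>k x. x \<in> B k \<Longrightarrow> norm x = 1" and Bf: "\<And>k. finite (B k)" and Bs: "\<And>k. span (B k) = V k"
    using obtain_bases[OF subsp] by metis
  have claim: "\<forall>E. \<exists>M\<ge>0. \<forall>H. in_cores V H \<and> (\<forall>j. j \<notin> S \<longrightarrow> H $ j = E $ j) \<longrightarrow>
      norm (\<Phi> H) \<le> M * (\<Prod>j\<in>S. norm (H $ j))" if "finite S" for S :: "'k set"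
    using that
  proof (induction S rule: finite_induct)
    case empty
    show ?case
    proof
      fix E :: "'v ^ 'k"
      have "\<forall>H. in_cores V H \<and> (\<forall>j. j \<notin> {} \<longrightarrow> H $ j = E $ j) \<longrightarrow>
        norm (\<Phi> H) \<le> norm (\<Phi> E) * (\<Prod>j\<in>{}. norm (H $ j))"
        by (auto simp: vec_eq_iff[symmetric])
      then show "\<exists>M\<ge>0. \<forall>H. in_cores V H \<and> (\<forall>j. j \<notin> {} \<longrightarrow> H $ j = E $ j) \<longrightarrow>
        norm (\<Phi> H) \<le> M * (\<Prod>j\<in>{}. norm (H $ j))" by (intro exI[of _ "norm (\<Phi> E)"]) auto
    qed
  next
    case (insert k S)
    show ?case
    proof
      fix E :: "'v ^ 'k"
      have "\<forall>b\<in>B k. \<exists>M\<ge>0. \<forall>H. in_cores V H \<and> (\<forall>j. j \<notin> S \<longrightarrow> H $ j = vupd E k b $ j) \<longrightarrow>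
        norm (\<Phi> H) \<le> M * (\<Prod>j\<in>S. norm (H $ j))"
        using insert.IH by blast
      then obtain Mb where Mb0: "\<And>b. b \<in> B k \<Longrightarrow> Mb b \<ge> 0" and
        Mb: "\<And>b H. b \<in> B k \<Longrightarrow> in_cores V H \<Longrightarrow> (\<forall>j. j \<notin> S \<longrightarrow> H $ j = vupd E k b $ j) \<Longrightarrow>
          norm (\<Phi> H) \<le> Mb b * (\<Prod>j\<in>S. norm (H $ j))"
        by metis
      define M where "M = (\<Sum>b\<in>B k. Mb b)"
      have M0: "M \<ge> 0" unfolding M_def using Mb0 by (simp add: sum_nonneg)
      have "norm (\<Phi> H) \<le> M * (\<Prod>j\<in>insert k S. norm (H $ j))"
        if H: "in_cores V H" and HE: "\<forall>j. j \<notin> insert k S \<longrightarrow> H $ j = E $ j" for H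
      proof -
        have HkV: "H $ k \<in> V k" using H by (simp add: in_cores_def)
        have exp: "H $ k = (\<Sum>b\<in>B k. (H $ k \<bullet> b) *\<^sub>R b)"
          using orthonormal_basis_expand[OF Bo B1 _ Bf, where x="H $ k"] HkV Bs by simp
        have "\<Phi> H = \<Phi> (vupd H k (\<Sum>b\<in>B k. (H $ k \<bullet> b) *\<^sub>R b))"
          using exp by (metis vupd_same)
        also have "\<dots> = (\<Sum>b\<in>B k. (H $ k \<bullet> b) *\<^sub>R \<Phi> (vupd H k b))"
          by (rule ml_sum[OF subsp ml H Bf BV])
        finally have eq: "\<Phi> H = (\<Sum>b\<in>B k. (H $ k \<bullet> b) *\<^sub>R \<Phi> (vupd H k b))" .
        have each: "norm ((H $ k \<bullet> b) *\<^sub>R \<Phi> (vupd H k b)) \<le> norm (H $ k) * (Mb b * (\<Prod>j\<in>S. norm (H $ j)))"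
          if b: "b \<in> B k" for b
        proof -
          have bV: "b \<in> V k" using b BV by blast
          have "norm (\<Phi> (vupd H k b)) \<le> Mb b * (\<Prod>j\<in>S. norm (vupd H k b $ j))"
            apply (rule Mb[OF b in_cores_vupd[OF H bV]])
            using HE by auto
          also have "(\<Prod>j\<in>S. norm (vupd H k b $ j)) = (\<Prod>j\<in>S. norm (H $ j))"
            using insert.hyps by (intro prod.cong) auto
          finally have 1: "norm (\<Phi> (vupd H k b)) \<le> Mb b * (\<Prod>j\<in>S. norm (H $ j))" .
          have 2: "\<bar>H $ k \<bullet> b\<bar> \<le> norm (H $ k)"
            using Cauchy_Schwarz_ineq2[of "H $ k" b] B1[OF b] by simp
          show ?thesis
            by (simp only: norm_scaleR) (rule mult_mono[OF 2 1]; simp)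
        qed
        have "norm (\<Phi> H) \<le> (\<Sum>b\<in>B k. norm ((H $ k \<bullet> b) *\<^sub>R \<Phi> (vupd H k b)))"
          unfolding eq by (rule norm_sum)
        also have "\<dots> \<le> (\<Sum>b\<in>B k. norm (H $ k) * (Mb b * (\<Prod>j\<in>S. norm (H $ j))))"
          by (rule sum_mono[OF each])
        also have "\<dots> = M * (\<Prod>j\<in>insert k S. norm (H $ j))"
          using insert.hyps by (simp add: M_def sum_distrib_left sum_distrib_right mult_ac)
        finally show ?thesis .
      qed
      then show "\<exists>M\<ge>0. \<forall>H. in_cores V H \<and> (\<forall>j. j \<notin> insert k S \<longrightarrow> H $ j = E $ j) \<longrightarrow>
        norm (\<Phi> H) \<le> M * (\<Prod>j\<in>insert k S. norm (H $ j))" using M0 by blast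
    qed
  qed
  from claim[of UNIV] show ?thesis by auto
qed



lemma phi_single:
  fixes V :: "'k::finite \<Rightarrow> 'v::euclidean_space set" and \<Phi> :: "'v ^ 'k \<Rightarrow> 'w::euclidean_space"
  assumes M0: "M \<ge> 0" and bound: "\<forall>H. in_cores V H \<longrightarrow> norm (\<Phi> H) \<le> M * (\<Prod>i\<in>UNIV. norm (H $ i))"
    and X: "in_cores V X" and d: "d \<in> V j" and r: "\<forall>i. norm (X $ i) \<le> r i"
  shows "norm (\<Phi> (vupd X j d)) \<le> M * (\<Prod>i\<in>UNIV. r i + 1) * norm d"
proof -
  have 1: "norm (\<Phi> (vupd X j d)) \<le> M * (\<Prod>i\<in>UNIV. norm (vupd X j d $ i))"
    using bound in_cores_vupd[OF X d] by blast
  have 2: "(\<Prod>i\<in>UNIV. norm (vupd X j d $ i)) = norm d * (\<Prod>i\<in>UNIV-{j}. norm (vupd X j d $ i))"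
    by (subst prod.remove[of UNIV j]) auto
  have 3: "(\<Prod>i\<in>UNIV-{j}. norm (vupd X j d $ i)) = (\<Prod>i\<in>UNIV-{j}. norm (X $ i))"
    by (intro prod.cong) auto
  have 4: "(\<Prod>i\<in>UNIV-{j}. norm (X $ i)) \<le> (\<Prod>i\<in>UNIV-{j}. r i + 1)"
  proof (rule prod_mono)
    fix i show "0 \<le> norm (X $ i) \<and> norm (X $ i) \<le> r i + 1"
      using r[rule_format, of i] by simp
  qed
  have 5: "(\<Prod>i\<in>UNIV-{j}. r i + 1) \<le> (\<Prod>i\<in>UNIV. r i + 1)"
  proof -
    have rj: "r j + 1 \<ge> 1" using r[rule_format, of j] norm_ge_zero[of "X $ j"] by linarith
    have nn: "(\<Prod>i\<in>UNIV-{j}. r i + 1) \<ge> 0"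
    proof (rule prod_nonneg)
      fix i show "0 \<le> r i + 1" using r[rule_format, of i] norm_ge_zero[of "X $ i"] by linarith
    qed
    have "(\<Prod>i\<in>UNIV. r i + 1) = (r j + 1) * (\<Prod>i\<in>UNIV-{j}. r i + 1)"
      by (subst prod.remove[of UNIV j]) auto
    moreover have "1 * (\<Prod>i\<in>UNIV-{j}. r i + 1) \<le> (r j + 1) * (\<Prod>i\<in>UNIV-{j}. r i + 1)"
      using mult_right_mono[OF rj nn] .
    ultimately show ?thesis by simp
  qed
  have 6: "(\<Prod>i\<in>UNIV. norm (vupd X j d $ i)) \<le> norm d * (\<Prod>i\<in>UNIV. r i + 1)"
    unfolding 2 3 by (rule mult_left_mono[OF order_trans[OF 4 5]]) simp
  have "M * (\<Prod>i\<in>UNIV. norm (vupd X j d $ i)) \<le> M * (norm d * (\<Prod>i\<in>UNIV. r i + 1))"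
    by (rule mult_left_mono[OF 6 M0])
  then show ?thesis using 1 by (simp add: mult_ac)
qed

lemma phi_lip:
  fixes V :: "'k::finite \<Rightarrow> 'v::euclidean_space set" and \<Phi> :: "'v ^ 'k \<Rightarrow> 'w::euclidean_space"
  assumes subsp: "\<forall>k. subspace (V k)" and ml: "multilinear_on V \<Phi>"
    and M0: "M \<ge> 0" and bound: "\<forall>H. in_cores V H \<longrightarrow> norm (\<Phi> H) \<le> M * (\<Prod>i\<in>UNIV. norm (H $ i))"
    and H: "in_cores V H" and H': "in_cores V H'"
    and r: "\<forall>i. norm (H $ i) \<le> r i \<and> norm (H' $ i) \<le> r i"
  shows "norm (\<Phi> H - \<Phi> H') \<le> M * (\<Prod>i\<in>UNIV. r i + 1) * (\<Sum>j\<in>UNIV. norm (H $ j - H' $ j))"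
proof -
  define P where "P = M * (\<Prod>i\<in>UNIV. r i + 1)"
  have claim: "\<forall>H'. in_cores V H' \<and> (\<forall>i. norm (H' $ i) \<le> r i) \<and> (\<forall>j. j \<notin> S \<longrightarrow> H $ j = H' $ j) \<longrightarrow>
     norm (\<Phi> H - \<Phi> H') \<le> P * (\<Sum>j\<in>S. norm (H $ j - H' $ j))" if "finite S" for S
    using that
  proof (induction S rule: finite_induct)
    case empty
    then show ?case by (auto simp: vec_eq_iff[symmetric])
  next
    case (insert k S)
    show ?case
    proof (intro allI impI)
      fix H' assume a: "in_cores V H' \<and> (\<forall>i. norm (H' $ i) \<le> r i) \<and> (\<forall>j. j \<notin> insert k S \<longrightarrow> H $ j = H' $ j)"
      have aC: "in_cores V H'" and aR: "\<forall>i. norm (H' $ i) \<le> r i" and aE: "\<forall>j. j \<notin> insert k S \<longrightarrow> H $ j = H' $ j"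
        using a by auto
      define H'' where "H'' = vupd H' k (H $ k)"
      have HkV: "H $ k \<in> V k" using H by (simp add: in_cores_def)
      have H'kV: "H' $ k \<in> V k" using aC by (simp add: in_cores_def)
      have H''c: "in_cores V H''" unfolding H''_def by (rule in_cores_vupd[OF aC HkV])
      have H''r: "\<forall>i. norm (H'' $ i) \<le> r i" using aR r by (simp add: H''_def)
      have H''S: "\<forall>j. j \<notin> S \<longrightarrow> H $ j = H'' $ j" using aE by (simp add: H''_def)
      have 1: "norm (\<Phi> H - \<Phi> H'') \<le> P * (\<Sum>j\<in>S. norm (H $ j - H'' $ j))"
        using insert.IH H''c H''r H''S by blast
      have s: "(\<Sum>j\<in>S. norm (H $ j - H'' $ j)) = (\<Sum>j\<in>S. norm (H $ j - H' $ j))"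
        using insert.hyps by (intro sum.cong) (auto simp: H''_def)
      have "\<Phi> H'' - \<Phi> H' = \<Phi> (vupd H' k (H $ k - H' $ k))"
        using ml_diff[OF ml aC HkV H'kV] by (simp add: H''_def)
      moreover have "norm (\<Phi> (vupd H' k (H $ k - H' $ k))) \<le> P * norm (H $ k - H' $ k)"
        unfolding P_def
        by (rule phi_single[OF M0 bound]) (use aC aR HkV H'kV subsp in \<open>auto simp: subspace_diff\<close>)
      ultimately have 2: "norm (\<Phi> H'' - \<Phi> H') \<le> P * norm (H $ k - H' $ k)" by simp
      have "norm (\<Phi> H - \<Phi> H') \<le> norm (\<Phi> H - \<Phi> H'') + norm (\<Phi> H'' - \<Phi> H')"
        by (rule norm_diff_triangle_le) auto
      also have "\<dots> \<le> P * (\<Sum>j\<in>S. norm (H $ j - H' $ j)) + P * norm (H $ k - H' $ k)"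
        using 1 2 unfolding s by linarith
      also have "\<dots> = P * (\<Sum>j\<in>insert k S. norm (H $ j - H' $ j))"
        using insert.hyps by (simp add: algebra_simps)
      finally show "norm (\<Phi> H - \<Phi> H') \<le> P * (\<Sum>j\<in>insert k S. norm (H $ j - H' $ j))" .
    qed
  qed
  show ?thesis using claim[of UNIV] H' r unfolding P_def by auto
qed



lemma nd_deriv:
  fixes \<gamma> :: "real \<Rightarrow> 'v::real_inner ^ 'k::finite"
  assumes gd: "(\<gamma> has_vector_derivative v) (at t0)"
  shows "((\<lambda>t. norm_dev (\<gamma> t)) has_real_derivative
    (\<Sum>k\<in>UNIV. 2 * ((norm (\<gamma> t0 $ k))\<^sup>2 - (1 / real CARD('k)) * (\<Sum>i\<in>UNIV. (norm (\<gamma> t0 $ i))\<^sup>2))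
       * (2 * (\<gamma> t0 $ k \<bullet> v $ k) - (1 / real CARD('k)) * (\<Sum>i\<in>UNIV. 2 * (\<gamma> t0 $ i \<bullet> v $ i))))) (at t0)"
proof -
  have a: "((\<lambda>t. (norm (\<gamma> t $ k))\<^sup>2) has_real_derivative 2 * (\<gamma> t0 $ k \<bullet> v $ k)) (at t0)" for k
  proof -
    have c: "((\<lambda>t. \<gamma> t $ k) has_derivative (\<lambda>s. s *\<^sub>R v $ k)) (at t0)"
      using bounded_linear.has_derivative[OF bounded_linear_vec_nth gd[unfolded has_vector_derivative_def], of k]
      by simp
    have "((\<lambda>t. \<gamma> t $ k \<bullet> \<gamma> t $ k) has_derivative
        (\<lambda>s. \<gamma> t0 $ k \<bullet> (s *\<^sub>R v $ k) + (s *\<^sub>R v $ k) \<bullet> \<gamma> t0 $ k)) (at t0)"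
      by (rule has_derivative_inner[OF c c])
    then have "((\<lambda>t. (norm (\<gamma> t $ k))\<^sup>2) has_derivative (\<lambda>s. (2 * (\<gamma> t0 $ k \<bullet> v $ k)) * s)) (at t0)"
      unfolding power2_norm_eq_inner
      by (rule has_derivative_eq_rhs) (simp add: fun_eq_iff inner_commute algebra_simps)
    then show ?thesis by (simp add: has_field_derivative_def)
  qed
  have "((\<lambda>t. norm_dev (\<gamma> t)) has_real_derivative
    (\<Sum>k\<in>UNIV. of_nat 2 * ((2 * (\<gamma> t0 $ k \<bullet> v $ k) - (1 / real CARD('k)) * (\<Sum>i\<in>UNIV. 2 * (\<gamma> t0 $ i \<bullet> v $ i)))
      * ((norm (\<gamma> t0 $ k))\<^sup>2 - (1 / real CARD('k)) * (\<Sum>i\<in>UNIV. (norm (\<gamma> t0 $ i))\<^sup>2)) ^ (2 - Suc 0)))) (at t0)"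
    unfolding norm_dev_def by (intro DERIV_sum DERIV_power DERIV_diff DERIV_cmult a)
  then show ?thesis by (rule DERIV_cong) (intro sum.cong refl, simp add: algebra_simps)
qed


lemma alg_id:
  fixes a q s :: "'k::finite \<Rightarrow> real"
  shows "(\<Sum>k\<in>UNIV. 2 * (a k - (1 / real CARD('k)) * (\<Sum>i\<in>UNIV. a i))
       * (2 * (r * q k - c) - (1 / real CARD('k)) * (\<Sum>i\<in>UNIV. 2 * (r * q i - c))))
     - 4 * r * real CARD('k) * emp_cov a s
     = 4 * r * (\<Sum>k\<in>UNIV. (a k - (1 / real CARD('k)) * (\<Sum>i\<in>UNIV. a i)) * (q k - s k))"
proof -
  define K where "K = real CARD('k)"
  have K0: "K > 0" unfolding K_def by simp
  define ab where "ab = (1 / K) * (\<Sum>i\<in>UNIV. a i)"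
  have z: "(\<Sum>k\<in>UNIV. (a k - ab)) = 0"
    using K0 by (simp add: ab_def sum_subtractf K_def[symmetric])
  have z2: "(\<Sum>k\<in>UNIV. (a k - ab) * w) = 0" for w
    using z by (simp add: sum_distrib_right[symmetric])
  define W where "W = (1 / K) * (\<Sum>i\<in>UNIV. 2 * (r * q i - c))"
  have pt: "2 * (a k - ab) * (2 * (r * q k - c) - W) = 4 * r * ((a k - ab) * q k) - (a k - ab) * (4 * c + 2 * W)" for k
    by (simp add: algebra_simps)
  have e1: "(\<Sum>k\<in>UNIV. 2 * (a k - ab) * (2 * (r * q k - c) - W))
      = 4 * r * (\<Sum>k\<in>UNIV. (a k - ab) * q k)"
    unfolding pt sum_subtractf z2 by (simp add: sum_distrib_left)
  have e2a: "K * emp_cov a s = (\<Sum>k\<in>UNIV. (a k - ab) * (s k - emp_mean s))"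
    using K0 by (simp add: emp_cov_def emp_mean_def ab_def K_def[symmetric])
  have e2: "K * emp_cov a s = (\<Sum>k\<in>UNIV. (a k - ab) * s k) - (\<Sum>k\<in>UNIV. (a k - ab) * emp_mean s)"
    unfolding e2a sum_subtractf[symmetric] by (simp add: right_diff_distrib)
  have z3: "(\<Sum>k\<in>UNIV. (a k - ab) * emp_mean s) = 0" by (rule z2)
  have e3: "(\<Sum>k\<in>UNIV. (a k - ab) * (q k - s k)) = (\<Sum>k\<in>UNIV. (a k - ab) * q k) - (\<Sum>k\<in>UNIV. (a k - ab) * s k)"
    by (simp add: sum_subtractf[symmetric] right_diff_distrib)
  have "(\<Sum>k\<in>UNIV. 2 * (a k - ab) * (2 * (r * q k - c) - W)) - 4 * r * K * emp_cov a s
      = 4 * r * (\<Sum>k\<in>UNIV. (a k - ab) * q k) - 4 * r * (K * emp_cov a s)"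
    unfolding e1 by simp
  also have "\<dots> = 4 * r * (\<Sum>k\<in>UNIV. (a k - ab) * (q k - s k))"
    unfolding e2 z3 e3 by (simp add: right_diff_distrib)
  finally show ?thesis unfolding K_def[symmetric] ab_def[symmetric] W_def[symmetric] .
qed

lemma sum_bound4:
  fixes x y :: "'k::finite \<Rightarrow> real"
  assumes "\<forall>k. \<bar>r * y k\<bar> \<le> B"
  shows "\<bar>4 * r * (\<Sum>k\<in>UNIV. x k * y k)\<bar> \<le> 4 * (\<Sum>k\<in>UNIV. \<bar>x k\<bar>) * B"
proof -
  have "\<bar>r * (\<Sum>k\<in>UNIV. x k * y k)\<bar> = \<bar>\<Sum>k\<in>UNIV. x k * (r * y k)\<bar>"
    by (simp add: sum_distrib_left mult_ac)
  also have "\<dots> \<le> (\<Sum>k\<in>UNIV. \<bar>x k * (r * y k)\<bar>)" by (rule sum_abs)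
  also have "\<dots> \<le> (\<Sum>k\<in>UNIV. \<bar>x k\<bar> * B)"
    using assms by (intro sum_mono) (simp add: abs_mult mult_left_mono)
  finally show ?thesis by (simp add: abs_mult sum_distrib_right)
qed



theorem theorem3:
  fixes V :: "'k::finite \<Rightarrow> 'v::euclidean_space set"
    and \<Phi> :: "'v ^ 'k \<Rightarrow> 'w::euclidean_space"
  assumes K2: "CARD('k) \<ge> 2"
    and subsp: "\<forall>k. subspace (V k)"
    and ml: "multilinear_on V \<Phi>"
  shows "\<exists>C :: real \<Rightarrow> ('k \<Rightarrow> real) \<Rightarrow> real \<Rightarrow> real.
    \<forall>(L::real) (f::'w \<Rightarrow> real) (gf::'w \<Rightarrow> 'w) (\<gamma>::real \<Rightarrow> 'v ^ 'k) (t0::real) (\<rho>::real).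
      (\<forall>X. (f has_derivative (\<lambda>H. gf X \<bullet> H)) (at X))
      \<and> (\<forall>X Y. norm (gf X - gf Y) \<le> L * norm (X - Y))
      \<and> 0 < \<rho> \<and> \<rho> \<le> 1
      \<and> in_cores V (\<gamma> t0)
      \<and> (\<exists>j. pgrad V (f \<circ> \<Phi>) (\<gamma> t0) j \<noteq> 0)
      \<and> (\<gamma> has_vector_derivative sam_vel V (f \<circ> \<Phi>) \<rho> (\<gamma> t0)) (at t0)
      \<longrightarrow> (\<exists>D. ((\<lambda>t. norm_dev (\<gamma> t)) has_real_derivative D) (at t0)
            \<and> \<bar>D - 4 * \<rho> * sam_u V (f \<circ> \<Phi>) (\<gamma> t0) * real CARD('k)
                   * emp_cov (\<lambda>k. (norm (\<gamma> t0 $ k))\<^sup>2)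
                              (\<lambda>k. (norm (pgrad V (f \<circ> \<Phi>) (\<gamma> t0) k))\<^sup>2)\<bar>
              \<le> C L (\<lambda>k. norm (\<gamma> t0 $ k)) (norm (gf (\<Phi> (\<gamma> t0)))) * \<rho>\<^sup>2)"
proof -
  obtain M where M0: "M \<ge> 0" and bound: "\<forall>H. in_cores V H \<longrightarrow> norm (\<Phi> H) \<le> M * (\<Prod>i\<in>UNIV. norm (H $ i))"
    using phi_bound[OF subsp ml] by blast
  define K where "K = real CARD('k)"
  have K0: "K > 0" by (simp add: K_def)
  define PP where "PP = (\<lambda>n::'k\<Rightarrow>real. \<Prod>i\<in>UNIV. n i + 1 + 1)"
  define C where "C = (\<lambda>(L::real) (n::'k\<Rightarrow>real) (\<beta>::real).
     4 * (\<Sum>k\<in>UNIV. \<bar>(n k)\<^sup>2 - (1 / K) * (\<Sum>i\<in>UNIV. (n i)\<^sup>2)\<bar>) *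
     (\<bar>L\<bar> * M\<^sup>2 * (PP n)\<^sup>2 * K + \<beta> * M * PP n * K))"
  show ?thesis
  proof (rule exI[of _ C], intro allI impI)
    fix L :: real and f :: "'w \<Rightarrow> real" and gf :: "'w \<Rightarrow> 'w" and \<gamma> :: "real \<Rightarrow> 'v ^ 'k" and t0 \<rho> :: real
    assume A: "(\<forall>X. (f has_derivative (\<lambda>H. gf X \<bullet> H)) (at X))
      \<and> (\<forall>X Y. norm (gf X - gf Y) \<le> L * norm (X - Y))
      \<and> 0 < \<rho> \<and> \<rho> \<le> 1
      \<and> in_cores V (\<gamma> t0)
      \<and> (\<exists>j. pgrad V (f \<circ> \<Phi>) (\<gamma> t0) j \<noteq> 0)
      \<and> (\<gamma> has_vector_derivative sam_vel V (f \<circ> \<Phi>) \<rho> (\<gamma> t0)) (at t0)"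
    have fd: "\<forall>X. (f has_derivative (\<lambda>H. gf X \<bullet> H)) (at X)" using A by blast
    have lip: "\<forall>X Y. norm (gf X - gf Y) \<le> L * norm (X - Y)" using A by blast
    have rho0: "0 < \<rho>" and rho1: "\<rho> \<le> 1" using A by auto
    have Gc: "in_cores V (\<gamma> t0)" using A by blast
    have gnz: "\<exists>j. pgrad V (f \<circ> \<Phi>) (\<gamma> t0) j \<noteq> 0" using A by blast
    have gd: "(\<gamma> has_vector_derivative sam_vel V (f \<circ> \<Phi>) \<rho> (\<gamma> t0)) (at t0)" using A by blast
    define F where "F = f \<circ> \<Phi>"
    define G where "G = \<gamma> t0"
    define g where "g = pgrad V F G"
    define u where "u = sam_u V F G"
    define Gt where "Gt = sam_pert V F \<rho> G"
    define gt where "gt = pgrad V F Gt"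
    define T where "T = \<Phi> G"
    define Tt where "Tt = \<Phi> Gt"
    define n where "n = (\<lambda>k. norm (G $ k))"
    define \<beta> where "\<beta> = norm (gf T)"
    define P where "P = PP n"
    define C1 where "C1 = \<bar>L\<bar> * M\<^sup>2 * P\<^sup>2 * K + \<beta> * M * P * K"
    have Gc': "in_cores V G" using Gc by (simp add: G_def)
    have g_char: "g k \<in> V k \<and> (\<forall>h\<in>V k. g k \<bullet> h = gf T \<bullet> \<Phi> (vupd G k h))" for k
      using pgrad_char[OF subsp ml fd Gc'] unfolding g_def F_def T_def by blast
    define S where "S = (\<Sum>j\<in>UNIV. (norm (g j))\<^sup>2)"
    have uS: "u = 1 / sqrt S" unfolding u_def sam_u_def S_def g_def by simp
    have Spos: "S > 0"
    proof -
      obtain j where j: "g j \<noteq> 0" using gnz by (auto simp: g_def F_def G_def)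
      have "(norm (g j))\<^sup>2 \<le> S" unfolding S_def by (rule member_le_sum) auto
      moreover have "(norm (g j))\<^sup>2 > 0" using j by simp
      ultimately show ?thesis by linarith
    qed
    have u0: "u > 0" using Spos by (simp add: uS)
    have ug: "u * norm (g k) \<le> 1" for k
    proof -
      have "(norm (g k))\<^sup>2 \<le> S" unfolding S_def by (rule member_le_sum) auto
      then have "norm (g k) \<le> sqrt S" by (simp add: real_le_rsqrt)
      then show ?thesis using Spos by (simp add: uS divide_le_eq_1)
    qed
    have Gt_nth: "Gt $ k = G $ k + (\<rho> * u) *\<^sub>R g k" for k
      unfolding Gt_def sam_pert_def g_def u_def by simp
    have Gtc: "in_cores V Gt"
      unfolding in_cores_def Gt_nth using Gc' g_char subsp
      by (simp add: in_cores_def subspace_add subspace_scale)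
    have gt_char: "gt k \<in> V k \<and> (\<forall>h\<in>V k. gt k \<bullet> h = gf Tt \<bullet> \<Phi> (vupd Gt k h))" for k
      using pgrad_char[OF subsp ml fd Gtc] unfolding gt_def F_def Tt_def by blast
    have dG: "norm (Gt $ k - G $ k) \<le> \<rho>" for k
    proof -
      have "norm (Gt $ k - G $ k) = \<rho> * (u * norm (g k))"
        using rho0 u0 by (simp add: Gt_nth abs_mult)
      also have "\<dots> \<le> \<rho> * 1" using ug rho0 by (intro mult_left_mono) auto
      finally show ?thesis by simp
    qed
    have Gt_r: "norm (Gt $ k) \<le> n k + 1" for k
    proof -
      have "norm (Gt $ k) \<le> norm (G $ k) + norm (Gt $ k - G $ k)" by (rule norm_triangle_sub)
      then show ?thesis using dG[of k] rho1 by (simp add: n_def)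
    qed
    have G_r: "norm (G $ k) \<le> n k + 1" for k by (simp add: n_def)
    have P0: "P \<ge> 0" unfolding P_def PP_def n_def by (intro prod_nonneg) (simp add: add_nonneg_nonneg)
    have PPe: "(\<Prod>i\<in>UNIV. n i + 1 + 1) = P" by (simp add: P_def PP_def)
    have sumK: "(\<Sum>j\<in>UNIV. norm (Gt $ j - G $ j)) \<le> K * \<rho>"
      using sum_bounded_above[of UNIV "\<lambda>j. norm (Gt $ j - G $ j)" \<rho>] dG by (simp add: K_def)
    have TT: "norm (Tt - T) \<le> M * P * (K * \<rho>)"
    proof -
      have "norm (Tt - T) \<le> M * P * (\<Sum>j\<in>UNIV. norm (Gt $ j - G $ j))"
        using phi_lip[OF subsp ml M0 bound Gtc Gc', of "\<lambda>i. n i + 1"] Gt_r G_r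
        unfolding Tt_def T_def PPe by blast
      also have "\<dots> \<le> M * P * (K * \<rho>)" using sumK M0 P0 by (intro mult_left_mono) auto
      finally show ?thesis .
    qed
    have gfTT: "norm (gf Tt - gf T) \<le> \<bar>L\<bar> * (M * P * (K * \<rho>))"
    proof -
      have "norm (gf Tt - gf T) \<le> L * norm (Tt - T)" using lip by blast
      also have "\<dots> \<le> \<bar>L\<bar> * norm (Tt - T)" by (intro mult_right_mono) auto
      also have "\<dots> \<le> \<bar>L\<bar> * (M * P * (K * \<rho>))" using TT by (intro mult_left_mono) auto
      finally show ?thesis .
    qed
    have C10: "C1 \<ge> 0" unfolding C1_def \<beta>_def using M0 P0 K0 by simp
    have err: "norm (gt k - g k) \<le> C1 * \<rho>" for k
    proof (cases "gt k - g k = 0")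
      case True
      then show ?thesis using C10 rho0 by simp
    next
      case False
      define d where "d = gt k - g k"
      have dV: "d \<in> V k" unfolding d_def using g_char gt_char subsp by (simp add: subspace_diff)
      have nd: "norm d > 0" using False by (simp add: d_def)
      define e where "e = (1 / norm d) *\<^sub>R d"
      have eV: "e \<in> V k" unfolding e_def using dV subsp by (simp add: subspace_scale)
      have ne: "norm e = 1" unfolding e_def using nd by simp
      define X where "X = \<Phi> (vupd Gt k e)"
      define Y where "Y = \<Phi> (vupd G k e)"
      have "norm d = d \<bullet> e"
        using nd by (simp add: e_def power2_norm_eq_inner[symmetric] power2_eq_square)
      also have "\<dots> = gt k \<bullet> e - g k \<bullet> e" by (simp add: d_def inner_diff_left)
      also have "\<dots> = gf Tt \<bullet> X - gf T \<bullet> Y" using g_char gt_char eV by (simp add: X_def Y_def)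
      also have "\<dots> = (gf Tt - gf T) \<bullet> X + gf T \<bullet> (X - Y)" by (simp add: inner_diff_left inner_diff_right)
      also have "\<dots> \<le> norm (gf Tt - gf T) * norm X + \<beta> * norm (X - Y)"
        unfolding \<beta>_def by (intro add_mono norm_cauchy_schwarz)
      also have "\<dots> \<le> (\<bar>L\<bar> * (M * P * (K * \<rho>))) * (M * P) + \<beta> * (M * P * (K * \<rho>))"
      proof (intro add_mono mult_mono)
        show "norm (gf Tt - gf T) \<le> \<bar>L\<bar> * (M * P * (K * \<rho>))" by (rule gfTT)
        show "norm X \<le> M * P"
          using phi_single[OF M0 bound Gtc eV, of "\<lambda>i. n i + 1"] Gt_r ne
          unfolding X_def PPe by simp
        have "norm (X - Y) \<le> M * P * (\<Sum>j\<in>UNIV. norm (vupd Gt k e $ j - vupd G k e $ j))"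
          using phi_lip[OF subsp ml M0 bound in_cores_vupd[OF Gtc eV] in_cores_vupd[OF Gc' eV], of "\<lambda>i. n i + 1"]
            Gt_r G_r ne
          unfolding X_def Y_def PPe by (simp add: n_def)
        also have "\<dots> \<le> M * P * (K * \<rho>)"
        proof (intro mult_left_mono)
          show "(\<Sum>j\<in>UNIV. norm (vupd Gt k e $ j - vupd G k e $ j)) \<le> K * \<rho>"
            using sum_bounded_above[of UNIV "\<lambda>j. norm (vupd Gt k e $ j - vupd G k e $ j)" \<rho>] dG rho0
            by (simp add: K_def)
        qed (use M0 P0 in auto)
        finally show "norm (X - Y) \<le> M * P * (K * \<rho>)" .
      qed (use M0 P0 K0 rho0 \<beta>_def in auto)
      also have "\<dots> = C1 * \<rho>" by (simp add: C1_def power2_eq_square algebra_simps)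
      finally show ?thesis by (simp add: d_def)
    qed
    define v where "v = sam_vel V F \<rho> G"
    have v_nth: "v $ k = - gt k" for k
      unfolding v_def sam_vel_def gt_def Gt_def by simp
    have gd': "(\<gamma> has_vector_derivative v) (at t0)" using gd by (simp add: v_def F_def G_def)
    define a where "a = (\<lambda>k. (norm (G $ k))\<^sup>2)"
    define ab where "ab = (1 / K) * (\<Sum>i\<in>UNIV. a i)"
    define s where "s = (\<lambda>k. (norm (g k))\<^sup>2)"
    define q where "q = (\<lambda>k. g k \<bullet> gt k)"
    define ct where "ct = gf Tt \<bullet> Tt"
    have eul: "Gt $ k \<bullet> gt k = ct" for k
    proof -
      have "Gt $ k \<in> V k" using Gtc by (simp add: in_cores_def)
      then have "gt k \<bullet> Gt $ k = gf Tt \<bullet> \<Phi> (vupd Gt k (Gt $ k))" using gt_char by blast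
      then show ?thesis by (simp add: ct_def Tt_def inner_commute)
    qed
    have p: "G $ k \<bullet> v $ k = \<rho> * u * q k - ct" for k
    proof -
      have "G $ k = Gt $ k - (\<rho> * u) *\<^sub>R g k" by (simp add: Gt_nth)
      then have "G $ k \<bullet> v $ k = - (Gt $ k \<bullet> gt k) + (\<rho> * u) * (g k \<bullet> gt k)"
        by (simp add: v_nth inner_diff_left)
      then show ?thesis using eul by (simp add: q_def)
    qed
    define D where "D = (\<Sum>k\<in>UNIV. 2 * ((norm (\<gamma> t0 $ k))\<^sup>2 - (1 / real CARD('k)) * (\<Sum>i\<in>UNIV. (norm (\<gamma> t0 $ i))\<^sup>2))
       * (2 * (\<gamma> t0 $ k \<bullet> v $ k) - (1 / real CARD('k)) * (\<Sum>i\<in>UNIV. 2 * (\<gamma> t0 $ i \<bullet> v $ i))))"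
    have Dd: "((\<lambda>t. norm_dev (\<gamma> t)) has_real_derivative D) (at t0)"
      unfolding D_def by (rule nd_deriv[OF gd'])
    have D_eq: "D = (\<Sum>k\<in>UNIV. 2 * (a k - (1 / real CARD('k)) * (\<Sum>i\<in>UNIV. a i))
       * (2 * ((\<rho> * u) * q k - ct) - (1 / real CARD('k)) * (\<Sum>i\<in>UNIV. 2 * ((\<rho> * u) * q i - ct))))"
      unfolding D_def a_def G_def[symmetric] p by (simp add: mult_ac)
    have main: "4 * \<rho> * sam_u V (f \<circ> \<Phi>) (\<gamma> t0) * real CARD('k)
                   * emp_cov (\<lambda>k. (norm (\<gamma> t0 $ k))\<^sup>2)
                              (\<lambda>k. (norm (pgrad V (f \<circ> \<Phi>) (\<gamma> t0) k))\<^sup>2)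
        = 4 * (\<rho> * u) * real CARD('k) * emp_cov a s"
      by (simp add: a_def s_def g_def u_def F_def G_def mult_ac)
    have diff: "D - 4 * (\<rho> * u) * real CARD('k) * emp_cov a s
        = 4 * (\<rho> * u) * (\<Sum>k\<in>UNIV. (a k - ab) * (q k - s k))"
      unfolding D_eq ab_def K_def by (rule alg_id)
    have yb: "\<forall>k. \<bar>(\<rho> * u) * (q k - s k)\<bar> \<le> \<rho> * (C1 * \<rho>)"
    proof
      fix k
      have "q k - s k = g k \<bullet> (gt k - g k)"
        by (simp add: q_def s_def inner_diff_right power2_norm_eq_inner)
      then have "\<bar>(\<rho> * u) * (q k - s k)\<bar> = \<rho> * u * \<bar>g k \<bullet> (gt k - g k)\<bar>"
        using rho0 u0 by (simp add: abs_mult)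
      also have "\<dots> \<le> \<rho> * u * (norm (g k) * norm (gt k - g k))"
        using rho0 u0 by (intro mult_left_mono Cauchy_Schwarz_ineq2) auto
      also have "\<dots> = \<rho> * ((u * norm (g k)) * norm (gt k - g k))" by (simp add: mult_ac)
      also have "\<dots> \<le> \<rho> * (1 * (C1 * \<rho>))"
        using rho0 ug[of k] err[of k] by (intro mult_left_mono mult_mono) auto
      finally show "\<bar>(\<rho> * u) * (q k - s k)\<bar> \<le> \<rho> * (C1 * \<rho>)" by simp
    qed
    have fin: "\<bar>D - 4 * (\<rho> * u) * real CARD('k) * emp_cov a s\<bar> \<le> 4 * (\<Sum>k\<in>UNIV. \<bar>a k - ab\<bar>) * (\<rho> * (C1 * \<rho>))"
      unfolding diff by (rule sum_bound4[OF yb])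
    have Ceq: "C L (\<lambda>k. norm (\<gamma> t0 $ k)) (norm (gf (\<Phi> (\<gamma> t0)))) * \<rho>\<^sup>2
        = 4 * (\<Sum>k\<in>UNIV. \<bar>a k - ab\<bar>) * (\<rho> * (C1 * \<rho>))"
      by (simp add: C_def C1_def a_def ab_def P_def n_def \<beta>_def T_def G_def power2_eq_square mult_ac)
    show "\<exists>D. ((\<lambda>t. norm_dev (\<gamma> t)) has_real_derivative D) (at t0)
            \<and> \<bar>D - 4 * \<rho> * sam_u V (f \<circ> \<Phi>) (\<gamma> t0) * real CARD('k)
                   * emp_cov (\<lambda>k. (norm (\<gamma> t0 $ k))\<^sup>2)
                              (\<lambda>k. (norm (pgrad V (f \<circ> \<Phi>) (\<gamma> t0) k))\<^sup>2)\<bar>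
              \<le> C L (\<lambda>k. norm (\<gamma> t0 $ k)) (norm (gf (\<Phi> (\<gamma> t0)))) * \<rho>\<^sup>2"
      using Dd fin unfolding main Ceq by blast
  qed
qed

end
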